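(* Let $\varphi$ be a toric plurisubharmonic function on $D(0,1)\subseteq\mathbf{C}^n$ such that near $0$, $\varphi=\frac{c}{2}\log\left(|z^{b_1}|^2+\cdots+|z^{b_r}|^2\right)+O(1)$ with $c>0$ and multi-indices $b_1,\dots,b_r$. Let $P(b)$ denote the convex hull of $\{b_1,\dots,b_r\}$. Then the Newton convex body of $\varphi$ is $P(\varphi)=c\,P(b)+\mathbf{R}^n_{\ge0}$.
   Context: A psh function on $D(0,1)$ is toric if it is invariant under $(z_j)\mapsto(e^{i\theta_j}z_j)$ for all real $\theta_j$; then there is a convex function $g$ on $U=(-\infty,0)^n$, increasing in each variable, with $\varphi(z)=g(\log|z_1|,\dots,\log|z_n|)$. The Newton convex body is $P(\varphi)=\{x\in\mathbf{R}^n:\sup_{y\in U}(\langle x,y\rangle-g(y))<+\infty\}$. $z^b=z_1^{b^{(1)}}\cdots z_n^{b^{(n)}}$; the sum $cP(b)+\mathbf{R}^n_{\ge0}$ is a Minkowski sum. *)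

theory Defs
  imports "HOL-Analysis.Analysis"
begin

definition unit_polydisc :: "(complex ^ 'n) set" where
  "unit_polydisc = {z. \<forall>i. cmod (z $ i) < 1}"

definition usc_on :: "('a::topological_space) set \<Rightarrow> ('a \<Rightarrow> ereal) \<Rightarrow> bool" where
  "usc_on \<Omega> u \<longleftrightarrow> (\<forall>z\<in>\<Omega>. \<forall>t. u z < t \<longrightarrow> eventually (\<lambda>w. u w < t) (at z within \<Omega>))"

text \<open>Plurisubharmonic on an open set: values in [-\<infinity>,+\<infinity>), upper semicontinuous,
  and the sub-mean value inequality on every closed complex disc
  {a + \<lambda> b : |\<lambda>| \<le> 1} contained in the set.  The mean value of the usc function
  (which may take the value -\<infinity>) is expressed as the infimum over k of the means of
  the bounded truncations max(u, k) (monotone convergence).\<close>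
definition psh_on :: "(complex ^ 'n) set \<Rightarrow> (complex ^ 'n \<Rightarrow> ereal) \<Rightarrow> bool" where
  "psh_on \<Omega> u \<longleftrightarrow> open \<Omega> \<and> (\<forall>z\<in>\<Omega>. u z \<noteq> \<infinity>) \<and> usc_on \<Omega> u \<and>
     (\<forall>a b. (\<forall>w. cmod w \<le> 1 \<longrightarrow> a + w *s b \<in> \<Omega>) \<longrightarrow>
        (\<forall>k::real. u a \<le> ereal (1 / (2 * pi) *
            integral {0..2 * pi} (\<lambda>t. real_of_ereal (max (u (a + cis t *s b)) (ereal k))))))"

definition toric_on :: "(complex ^ 'n) set \<Rightarrow> (complex ^ 'n \<Rightarrow> ereal) \<Rightarrow> bool" where
  "toric_on \<Omega> u \<longleftrightarrow> (\<forall>\<theta>::real^'n. \<forall>z\<in>\<Omega>. u (\<chi> i. cis (\<theta> $ i) * z $ i) = u z)"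

definition negorthant :: "(real ^ 'n) set" where
  "negorthant = {y. \<forall>i. y $ i < 0}"

definition newton_body :: "(complex ^ 'n \<Rightarrow> ereal) \<Rightarrow> (real ^ 'n) set" where
  "newton_body u = {x. (SUP y\<in>negorthant. ereal (x \<bullet> y) - u (\<chi> i. complex_of_real (exp (y $ i)))) < \<infinity>}"

definition monomial_sq :: "nat ^ 'n \<Rightarrow> complex ^ 'n \<Rightarrow> real" where
  "monomial_sq b z = (\<Prod>i\<in>UNIV. cmod (z $ i) ^ (2 * b $ i))"

definition log_model :: "real \<Rightarrow> nat \<Rightarrow> (nat \<Rightarrow> nat ^ 'n) \<Rightarrow> complex ^ 'n \<Rightarrow> ereal" where
  "log_model c r b z =
     (let s = (\<Sum>j=1..r. monomial_sq (b j) z) in if s = 0 then -\<infinity> else ereal (c / 2 * ln s))"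

definition newton_polytope :: "nat \<Rightarrow> (nat \<Rightarrow> nat ^ 'n) \<Rightarrow> (real ^ 'n) set" where
  "newton_polytope r b = convex hull ((\<lambda>j. \<chi> i. real (b j $ i)) ` {1..r})"

end

theory Submission
  imports Defs
begin

definition upd :: "complex^'n \<Rightarrow> 'n \<Rightarrow> complex \<Rightarrow> complex^'n" where
  "upd z i w = (\<chi> j. if j = i then w else z $ j)"

lemma upd_in:
  assumes "(z::complex^'n) \<in> unit_polydisc" "cmod w < 1"
  shows "upd z (i::'n) w \<in> unit_polydisc"
  using assms by (auto simp: unit_polydisc_def upd_def)

lemma toric_upd:
  assumes toric: "toric_on unit_polydisc \<phi>" and z: "(z::complex^'n) \<in> unit_polydisc" and w: "cmod w < 1"
  shows "\<phi> (upd z (i::'n) w) = \<phi> (upd z i (complex_of_real (cmod w)))"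
proof -
  define \<theta> :: "real^'n" where "\<theta> = (\<chi> j. if j = i then Arg w else 0)"
  have in1: "upd z i (complex_of_real (cmod w)) \<in> unit_polydisc"
    using upd_in[OF z] w by simp
  have eq: "(\<chi> j. cis (\<theta> $ j) * (upd z i (complex_of_real (cmod w))) $ j) = upd z i w"
  proof -
    have "cis (Arg w) * complex_of_real (cmod w) = w"
      using rcis_cmod_Arg[of w] by (simp add: rcis_def mult.commute)
    then show ?thesis by (simp add: vec_eq_iff upd_def \<theta>_def)
  qed
  show ?thesis using toric in1 unfolding toric_on_def by (metis eq)
qed

lemma psh_circle:
  assumes psh: "psh_on unit_polydisc \<phi>" and z: "(z::complex^'n) \<in> unit_polydisc"
    and \<rho>: "0 \<le> \<rho>" and \<delta>: "0 < \<delta>" "\<rho> + \<delta> < 1"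
  shows "\<phi> (upd z (i::'n) (complex_of_real \<rho>)) \<le> ereal (1 / (2 * pi) *
            integral {0..2 * pi} (\<lambda>t. real_of_ereal (max (\<phi> (upd z i (complex_of_real \<rho> + cis t * complex_of_real \<delta>))) (ereal k))))"
proof -
  define a where "a = upd z i (complex_of_real \<rho>)"
  define bb :: "complex^'n" where "bb = upd 0 i (complex_of_real \<delta>)"
  have eqw: "a + w *s bb = upd z i (complex_of_real \<rho> + w * complex_of_real \<delta>)" for w
    by (simp add: vec_eq_iff upd_def a_def bb_def)
  have "\<forall>w. cmod w \<le> 1 \<longrightarrow> a + w *s bb \<in> unit_polydisc"
  proof (intro allI impI)
    fix w :: complex assume w: "cmod w \<le> 1"
    have "cmod (complex_of_real \<rho> + w * complex_of_real \<delta>) \<le> \<rho> + cmod w * \<delta>"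
      using norm_triangle_ineq[of "complex_of_real \<rho>" "w * complex_of_real \<delta>"] \<rho> \<delta>
      by (simp add: norm_mult)
    also have "\<dots> \<le> \<rho> + \<delta>" using w \<delta> by (simp add: mult_left_le_one_le)
    finally show "a + w *s bb \<in> unit_polydisc" unfolding eqw using upd_in[OF z] \<delta> by simp
  qed
  then have "\<phi> a \<le> ereal (1/(2*pi) * integral {0..2*pi} (\<lambda>t. real_of_ereal (max (\<phi> (a + cis t *s bb)) (ereal k))))"
    using psh unfolding psh_on_def by blast
  then show ?thesis unfolding eqw by (simp add: a_def)
qed

lemma usc_compose:
  fixes \<gamma> :: "'a::metric_space \<Rightarrow> complex^'n"
  assumes usc: "usc_on unit_polydisc \<phi>" and cont: "continuous_on S \<gamma>"
    and img: "\<gamma> ` S \<subseteq> unit_polydisc" and x: "x \<in> S" and lt: "\<phi> (\<gamma> x) < y"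
  shows "\<exists>e>0. \<forall>x'\<in>S. dist x' x < e \<longrightarrow> \<phi> (\<gamma> x') < y"
proof -
  have "\<gamma> x \<in> unit_polydisc" using img x by auto
  then have "eventually (\<lambda>w. \<phi> w < y) (at (\<gamma> x) within unit_polydisc)"
    using usc lt unfolding usc_on_def by blast
  then obtain d where d: "d > 0" "\<And>w. w \<in> unit_polydisc \<Longrightarrow> w \<noteq> \<gamma> x \<Longrightarrow> dist w (\<gamma> x) < d \<Longrightarrow> \<phi> w < y"
    unfolding eventually_at by blast
  obtain e where e: "e > 0" "\<And>x'. x' \<in> S \<Longrightarrow> dist x' x < e \<Longrightarrow> dist (\<gamma> x') (\<gamma> x) < d"
    using cont x d(1) unfolding continuous_on_iff by blast
  show ?thesis
  proof (intro exI[of _ e] conjI ballI impI)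
    fix x' assume x': "x' \<in> S" "dist x' x < e"
    show "\<phi> (\<gamma> x') < y"
    proof (cases "\<gamma> x' = \<gamma> x")
      case True then show ?thesis using lt by simp
    next
      case False then show ?thesis using d(2)[of "\<gamma> x'"] e(2)[OF x'] img x'(1) by auto
    qed
  qed (use e in auto)
qed

lemma usc_max:
  fixes h :: "'a::metric_space \<Rightarrow> ereal"
  assumes K: "compact K" "K \<noteq> {}"
    and usc: "\<And>x y. x \<in> K \<Longrightarrow> h x < y \<Longrightarrow> \<exists>e>0. \<forall>x'\<in>K. dist x' x < e \<longrightarrow> h x' < y"
  shows "\<exists>x\<in>K. \<forall>x'\<in>K. h x' \<le> h x"
proof (rule ccontr)
  assume nomax: "\<not> ?thesis"
  define s where "s = (SUP x\<in>K. h x)"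
  have lts: "h x < s" if "x \<in> K" for x
  proof -
    have "h x \<le> s" unfolding s_def using that by (rule SUP_upper)
    moreover have "h x \<noteq> s"
    proof
      assume "h x = s"
      then have "\<forall>x'\<in>K. h x' \<le> h x" unfolding s_def by (simp add: SUP_upper)
      then show False using nomax that by blast
    qed
    ultimately show ?thesis by simp
  qed
  have "\<forall>x\<in>K. \<exists>y. h x < y \<and> y < s" using lts dense by blast
  then obtain yy where yy: "\<And>x. x \<in> K \<Longrightarrow> h x < yy x \<and> yy x < s" by metis
  have "\<forall>x\<in>K. \<exists>e>0. \<forall>x'\<in>K. dist x' x < e \<longrightarrow> h x' < yy x" using usc yy by blast
  then obtain ee where ee: "\<And>x. x \<in> K \<Longrightarrow> ee x > 0 \<and> (\<forall>x'\<in>K. dist x' x < ee x \<longrightarrow> h x' < yy x)" by metis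
  have cov: "K \<subseteq> (\<Union>x\<in>K. ball x (ee x))" using ee by force
  obtain T where T: "T \<subseteq> K" "finite T" "K \<subseteq> (\<Union>x\<in>T. ball x (ee x))"
    using compactE_image[OF K(1), of K "\<lambda>x. ball x (ee x)"] cov by blast
  have Tne: "T \<noteq> {}" using T(3) K(2) by auto
  define Y where "Y = Max (yy ` T)"
  have Ys: "Y < s" unfolding Y_def using T Tne yy by (subst Max_less_iff) auto
  have "h x' \<le> Y" if x'K: "x' \<in> K" for x'
  proof -
    obtain t where t: "t \<in> T" "x' \<in> ball t (ee t)" using T(3) x'K by blast
    then have "h x' < yy t" using ee[of t] T(1) x'K by (auto simp: dist_commute)
    also have "yy t \<le> Y" unfolding Y_def using T t by auto
    finally show ?thesis by simp
  qed
  then have "s \<le> Y" unfolding s_def by (rule SUP_least)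
  then show False using Ys by simp
qed

lemma usc_integrable:
  fixes f :: "real \<Rightarrow> real"
  assumes op: "\<And>y. open {t. f t < y}" and bd: "\<And>t. \<bar>f t\<bar> \<le> B"
  shows "f integrable_on {a..b}"
proof (rule measurable_bounded_by_integrable_imp_integrable[where g="\<lambda>_. B"])
  show "f \<in> borel_measurable (lebesgue_on {a..b})"
  proof (rule borel_measurableI_less)
    fix y
    have "{t. f t < y} \<in> sets lebesgue" using op[of y] by (simp add: borel_open sets_completionI_sets)
    then have "{a..b} \<inter> {t. f t < y} \<in> sets lebesgue" by auto
    then show "{x \<in> space (lebesgue_on {a..b}). f x < y} \<in> sets (lebesgue_on {a..b})"
      by (auto simp add: sets_restrict_space_iff Int_def)
  qed
qed (use bd in auto)

lemma real_max_bounds: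
  assumes "X \<noteq> \<infinity>" "X \<le> ereal m" "k \<le> m"
  shows "k \<le> real_of_ereal (max X (ereal k)) \<and> real_of_ereal (max X (ereal k)) \<le> m"
  using assms by (cases X) (auto simp: max_def)

lemma real_max_less_iff:
  assumes "X \<noteq> \<infinity>" "k < y"
  shows "real_of_ereal (max X (ereal k)) < y \<longleftrightarrow> X < ereal y"
  using assms by (cases X) (auto simp: max_def)

lemma cmod_circle_sq:
  "(cmod (complex_of_real \<rho> + cis t * complex_of_real \<delta>))\<^sup>2 = \<rho>\<^sup>2 + 2 * \<rho> * \<delta> * cos t + \<delta>\<^sup>2"
proof -
  have e: "\<delta> * (\<delta> * (cos t * cos t)) + \<delta> * (\<delta> * (sin t * sin t)) = \<delta> * \<delta>"
  proof -
    have "\<delta> * \<delta> * (cos t * cos t + sin t * sin t) = \<delta> * \<delta>" by (simp add: sin_cos_squared_add3)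
    then show ?thesis by (simp only: distrib_left mult.assoc)
  qed
  have "(cmod (complex_of_real \<rho> + cis t * complex_of_real \<delta>))\<^sup>2 = (\<rho> + \<delta> * cos t)\<^sup>2 + (\<delta> * sin t)\<^sup>2"
    by (simp add: cmod_power2 mult.commute)
  also have "\<dots> = \<rho>\<^sup>2 + 2 * \<rho> * \<delta> * cos t + \<delta>\<^sup>2"
    using e by (simp add: power2_eq_square algebra_simps)
  finally show ?thesis .
qed

lemma mono_coord:
  assumes psh: "psh_on unit_polydisc \<phi>" and toric: "toric_on unit_polydisc \<phi>"
    and z: "(z::complex^'n) \<in> unit_polydisc" and r: "0 \<le> r1" "r1 \<le> r2" "r2 < 1"
  shows "\<phi> (upd z (i::'n) (complex_of_real r1)) \<le> \<phi> (upd z i (complex_of_real r2))"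
proof (rule ccontr)
  define v where "v r = \<phi> (upd z i (complex_of_real r))" for r
  assume "\<not> ?thesis"
  then have lt: "v r2 < v r1" unfolding v_def by simp
  have usc: "usc_on unit_polydisc \<phi>" and fin: "\<And>w. w \<in> unit_polydisc \<Longrightarrow> \<phi> w \<noteq> \<infinity>"
    using psh unfolding psh_on_def by auto
  have vusc: "\<exists>e>0. \<forall>x'\<in>{lo..hi}. dist x' x < e \<longrightarrow> v x' < y"
    if "0 \<le> lo" "hi < 1" "x \<in> {lo..hi}" "v x < y" for lo hi x y
  proof -
    have "continuous_on {lo..hi} (\<lambda>r. upd z i (complex_of_real r))"
      unfolding upd_def apply (rule continuous_on_vec_lambda)
      subgoal for j by (cases "j = i") (auto intro!: continuous_intros)
      done
    moreover have "(\<lambda>r. upd z i (complex_of_real r)) ` {lo..hi} \<subseteq> unit_polydisc"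
      using that(1,2) by (auto intro!: upd_in[OF z])
    ultimately show ?thesis using usc_compose[OF usc _ _ that(3)] that(4) unfolding v_def by blast
  qed
  obtain \<rho>0 where \<rho>0: "\<rho>0 \<in> {0..r2}" "\<And>x'. x' \<in> {0..r2} \<Longrightarrow> v x' \<le> v \<rho>0"
    using usc_max[of "{0..r2}" v] vusc[of 0 r2] r by auto
  define M where "M = v \<rho>0"
  define Z where "Z = {r \<in> {0..r2}. M \<le> v r}"
  define \<rho> where "\<rho> = Sup Z"
  have Z0: "\<rho>0 \<in> Z" using \<rho>0 unfolding Z_def M_def by auto
  have bdd: "bdd_above Z" unfolding Z_def by (auto intro: bdd_aboveI[of _ r2])
  have \<rho>ge: "\<rho>0 \<le> \<rho>" unfolding \<rho>_def using Z0 bdd by (rule cSup_upper)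
  have \<rho>le: "\<rho> \<le> r2" unfolding \<rho>_def using Z0 by (intro cSup_least) (auto simp: Z_def)
  have \<rho>0ge: "0 \<le> \<rho>" using \<rho>ge \<rho>0 by auto
  have v\<rho>: "v \<rho> = M"
  proof (rule ccontr)
    have "v \<rho> \<le> M" using \<rho>0(2)[of \<rho>] \<rho>0ge \<rho>le unfolding M_def by auto
    moreover assume "v \<rho> \<noteq> M"
    ultimately have "v \<rho> < M" by simp
    then obtain e where e: "e > 0" "\<And>x'. x' \<in> {0..r2} \<Longrightarrow> dist x' \<rho> < e \<Longrightarrow> v x' < M"
      using vusc[of 0 r2 \<rho> M] \<rho>0ge \<rho>le r by auto
    obtain x' where x': "x' \<in> Z" "\<rho> - e < x'"
      using less_cSupD[of Z "\<rho> - e"] Z0 e(1) unfolding \<rho>_def by fastforce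
    have "x' \<le> \<rho>" unfolding \<rho>_def using x'(1) bdd by (rule cSup_upper)
    then have "dist x' \<rho> < e" using x'(2) by (simp add: dist_real_def)
    then have "v x' < M" using e(2)[of x'] x'(1) unfolding Z_def by auto
    then show False using x'(1) unfolding Z_def by auto
  qed
  have above: "v x < M" if "\<rho> < x" "x \<le> r2" for x
  proof (rule ccontr)
    assume "\<not> v x < M"
    then have "x \<in> Z" unfolding Z_def using that \<rho>0ge by auto
    then have "x \<le> \<rho>" unfolding \<rho>_def using bdd by (rule cSup_upper)
    then show False using that by simp
  qed
  have Mge: "v r1 \<le> M" using \<rho>0(2)[of r1] r unfolding M_def by auto
  have \<rho>lt: "\<rho> < r2"
  proof (rule ccontr)
    assume "\<not> \<rho> < r2" then have "\<rho> = r2" using \<rho>le by simp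
    then show False using v\<rho> Mge lt by simp
  qed
  have "M \<noteq> -\<infinity>" using Mge lt by auto
  moreover have "M \<noteq> \<infinity>" unfolding M_def v_def using r \<rho>0(1) by (intro fin upd_in[OF z]) auto
  ultimately obtain m where Mm: "M = ereal m" by (cases M) auto
  define \<delta> where "\<delta> = r2 - \<rho>"
  have \<delta>: "\<delta> > 0" "\<rho> + \<delta> = r2" using \<rho>lt unfolding \<delta>_def by auto
  define a' where "a' = sqrt (\<rho>\<^sup>2 + \<delta>\<^sup>2)"
  have a'gt: "\<rho> < a'"
  proof -
    have "sqrt (\<rho>\<^sup>2) < a'" unfolding a'_def using \<delta>(1) by (intro real_sqrt_less_mono) simp
    then show ?thesis using \<rho>0ge by simp
  qed
  have a'le: "a' \<le> r2"
  proof -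
    have "r2\<^sup>2 = \<rho>\<^sup>2 + \<delta>\<^sup>2 + 2 * (\<rho> * \<delta>)" using \<delta>(2)[symmetric] by (simp add: power2_eq_square algebra_simps)
    moreover have "0 \<le> \<rho> * \<delta>" using \<delta> \<rho>0ge by simp
    ultimately have "\<rho>\<^sup>2 + \<delta>\<^sup>2 \<le> r2\<^sup>2" by linarith
    then have "a' \<le> sqrt (r2\<^sup>2)" unfolding a'_def by (rule real_sqrt_le_mono)
    then show ?thesis using r by simp
  qed
  obtain \<sigma> where \<sigma>: "\<sigma> \<in> {a'..r2}" "\<And>x'. x' \<in> {a'..r2} \<Longrightarrow> v x' \<le> v \<sigma>"
    using usc_max[of "{a'..r2}" v] vusc[of a' r2] r a'le a'gt \<rho>0ge by auto
  have v\<sigma>: "v \<sigma> < ereal m" using above[of \<sigma>] \<sigma>(1) a'gt Mm by auto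
  define k where "k = m - 1"
  define L where "L = max (v \<sigma>) (ereal k)"
  have "L < ereal m" unfolding L_def k_def using v\<sigma> by auto
  moreover have "L \<noteq> -\<infinity>" unfolding L_def by (cases "v \<sigma>") (auto simp: max_def)
  ultimately obtain l where Ll: "L = ereal l" "l < m" by (cases L) auto
  define R where "R t = cmod (complex_of_real \<rho> + cis t * complex_of_real \<delta>)" for t
  have Rle: "R t \<le> r2" for t
  proof -
    have "R t \<le> cmod (complex_of_real \<rho>) + cmod (cis t * complex_of_real \<delta>)"
      unfolding R_def by (rule norm_triangle_ineq)
    also have "\<dots> = \<rho> + \<delta>" using \<rho>0ge \<delta> by (simp add: norm_mult)
    finally show ?thesis using \<delta> by simp
  qed
  have Rge: "0 \<le> R t" for t unfolding R_def by simp
  define f where "f t = real_of_ereal (max (v (R t)) (ereal k))" for t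
  have circ: "\<phi> (upd z i (complex_of_real \<rho> + cis t * complex_of_real \<delta>)) = v (R t)" for t
    unfolding v_def R_def using Rle[of t] r by (intro toric_upd[OF toric z]) (simp add: R_def)
  have sub: "M \<le> ereal (1 / (2 * pi) * integral {0..2 * pi} f)"
  proof -
    have "v \<rho> \<le> ereal (1 / (2 * pi) * integral {0..2 * pi} (\<lambda>t. real_of_ereal (max (\<phi> (upd z i (complex_of_real \<rho> + cis t * complex_of_real \<delta>))) (ereal k))))"
      unfolding v_def using \<delta> r \<rho>0ge by (intro psh_circle[OF psh z]) auto
    moreover have "(\<lambda>t. real_of_ereal (max (v (R t)) (ereal k))) = f" by (rule ext) (simp add: f_def)
    ultimately show ?thesis using v\<rho> by (simp add: circ)
  qed
  have vR: "v (R t) \<le> ereal m" for t using \<rho>0(2)[of "R t"] Rle[of t] Rge[of t] Mm unfolding M_def by auto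
  have vRfin: "v (R t) \<noteq> \<infinity>" for t
    unfolding v_def using Rle[of t] Rge[of t] r by (intro fin upd_in[OF z]) auto
  have fb: "k \<le> f t \<and> f t \<le> m" for t
    unfolding f_def using real_max_bounds[OF vRfin vR] k_def by simp
  have fl: "f t \<le> l" if "t \<in> {0..pi/2}" for t
  proof -
    have "cos t \<ge> 0" using that by (intro cos_ge_zero) auto
    then have "\<rho>\<^sup>2 + \<delta>\<^sup>2 \<le> (R t)\<^sup>2" unfolding R_def cmod_circle_sq using \<rho>0ge \<delta> by simp
    then have "a' \<le> sqrt ((R t)\<^sup>2)" unfolding a'_def by (rule real_sqrt_le_mono)
    then have "a' \<le> R t" using Rge[of t] by simp
    then have "v (R t) \<le> v \<sigma>" using \<sigma>(2)[of "R t"] Rle[of t] by auto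
    then have "max (v (R t)) (ereal k) \<le> L" unfolding L_def by (auto simp: max_def)
    then show ?thesis unfolding f_def using Ll vRfin[of t] by (cases "v (R t)") (auto simp: max_def)
  qed
  have fopen: "open {t. f t < y}" for y
  proof (cases "k < y")
    case False
    have "\<not> f t < y" for t using fb[of t] False by linarith
    then have "{t. f t < y} = {}" by blast
    then show ?thesis by simp
  next
    case True
    define \<gamma> where "\<gamma> t = upd z i (complex_of_real \<rho> + cis t * complex_of_real \<delta>)" for t
    have cont: "continuous_on UNIV \<gamma>" unfolding \<gamma>_def upd_def apply (rule continuous_on_vec_lambda)
      subgoal for j by (cases "j = i") (auto intro!: continuous_intros)
      done
    have img1: "\<gamma> t \<in> unit_polydisc" for t
      unfolding \<gamma>_def by (rule upd_in[OF z]) (use Rle[of t] r in \<open>unfold R_def, linarith\<close>)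
    have img: "\<gamma> ` UNIV \<subseteq> unit_polydisc" using img1 by blast
    have eq1: "f t < y \<longleftrightarrow> \<phi> (\<gamma> t) < ereal y" for t
      unfolding f_def \<gamma>_def circ by (rule real_max_less_iff[OF vRfin True])
    have eq: "{t. f t < y} = {t. \<phi> (\<gamma> t) < ereal y}" using eq1 by blast
    show ?thesis unfolding eq open_dist
    proof (intro ballI)
      fix t assume "t \<in> {t. \<phi> (\<gamma> t) < ereal y}"
      then obtain e where "e > 0" "\<forall>x'\<in>UNIV. dist x' t < e \<longrightarrow> \<phi> (\<gamma> x') < ereal y"
        using usc_compose[OF usc cont img, of t "ereal y"] by blast
      then show "\<exists>e>0. \<forall>y'. dist y' t < e \<longrightarrow> y' \<in> {t. \<phi> (\<gamma> t) < ereal y}" by blast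
    qed
  qed
  have fabs: "\<bar>f t\<bar> \<le> \<bar>k\<bar> + \<bar>m\<bar>" for t using fb[of t] by auto
  have int: "f integrable_on {a..b}" for a b by (rule usc_integrable[OF fopen fabs])
  have I1: "integral {0..pi/2} f \<le> integral {0..pi/2} (\<lambda>_. l)"
    by (rule integral_le[OF int]) (use fl in auto)
  have I2: "integral {pi/2..2*pi} f \<le> integral {pi/2..2*pi} (\<lambda>_. m)"
    by (rule integral_le[OF int]) (use fb in auto)
  have "integral {0..2*pi} f = integral {0..pi/2} f + integral {pi/2..2*pi} f"
    by (rule Henstock_Kurzweil_Integration.integral_combine[symmetric]) (use int pi_gt_zero in auto)
  also have "\<dots> \<le> l * (pi/2) + m * (3*pi/2)" using I1 I2 pi_gt_zero by (simp add: algebra_simps)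
  finally have Ile: "integral {0..2*pi} f \<le> l * (pi/2) + m * (3*pi/2)" .
  have "m \<le> 1 / (2 * pi) * integral {0..2 * pi} f" using sub Mm by simp
  also have "\<dots> \<le> 1 / (2 * pi) * (l * (pi/2) + m * (3*pi/2))"
    using Ile pi_gt_zero by (intro mult_left_mono) auto
  also have "\<dots> = l / 4 + 3 * m / 4" using pi_gt_zero by (simp add: field_simps)
  finally show False using Ll(2) by simp
qed

lemma mono_all:
  assumes psh: "psh_on unit_polydisc \<phi>" and toric: "toric_on unit_polydisc \<phi>"
    and u: "\<And>i. 0 \<le> (u::real^'n) $ i" and uw: "\<And>i. u $ i \<le> w $ i" and w: "\<And>i. w $ i < 1"
  shows "\<phi> (\<chi> i. complex_of_real (u $ i)) \<le> \<phi> (\<chi> i. complex_of_real (w $ i))"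
proof -
  define mix where "mix F = (\<chi> i. complex_of_real (if i \<in> F then w $ i else u $ i))" for F
  have inP: "mix F \<in> unit_polydisc" for F
  proof -
    have "\<bar>w $ i\<bar> < 1" for i using u[of i] uw[of i] w[of i] by linarith
    moreover have "\<bar>u $ i\<bar> < 1" for i using u[of i] uw[of i] w[of i] by linarith
    ultimately show ?thesis by (auto simp: mix_def unit_polydisc_def)
  qed
  have "finite F \<Longrightarrow> \<phi> (mix {}) \<le> \<phi> (mix F)" for F
  proof (induction F rule: finite_induct)
    case empty then show ?case by simp
  next
    case (insert k F)
    have e1: "mix F = upd (mix F) k (complex_of_real (u $ k))"
      using insert(2) by (auto simp: vec_eq_iff upd_def mix_def)
    have e2: "mix (insert k F) = upd (mix F) k (complex_of_real (w $ k))"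
      by (auto simp: vec_eq_iff upd_def mix_def)
    have "\<phi> (mix F) \<le> \<phi> (mix (insert k F))"
      using mono_coord[OF psh toric inP[of F] u[of k] uw[of k] w[of k], of k] e1 e2 by simp
    then show ?case using insert(3) by simp
  qed
  from this[of UNIV] show ?thesis by (simp add: mix_def)
qed

lemma minus_ereal_mono2:
  assumes "X \<le> ereal u"
  shows "ereal a - ereal u \<le> ereal a - X"
  using assms by (cases X) auto

lemma monomial_exp:
  "monomial_sq b (\<chi> i. complex_of_real (exp ((y::real^'n) $ i)))
     = exp (2 * ((\<chi> i. real (b $ i)) \<bullet> y))"
proof -
  have "monomial_sq b (\<chi> i. complex_of_real (exp (y $ i))) = (\<Prod>i\<in>UNIV. exp (real (2 * b $ i) * y $ i))"
    unfolding monomial_sq_def by (intro prod.cong refl) (simp add: exp_of_nat_mult[symmetric] mult.commute)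
  also have "\<dots> = exp (\<Sum>i\<in>UNIV. real (2 * b $ i) * y $ i)" by (simp add: exp_sum)
  also have "(\<Sum>i\<in>UNIV. real (2 * b $ i) * y $ i) = 2 * ((\<chi> i. real (b $ i)) \<bullet> y)"
    by (simp add: inner_vec_def sum_distrib_left mult.assoc)
  finally show ?thesis .
qed

lemma inner_sum_real: "(x::real^'n) \<bullet> y = (\<Sum>i\<in>UNIV. x $ i * y $ i)"
  by (simp add: inner_vec_def)

lemma S_closed_convex:
  fixes P :: "(real^'n) set" and c :: real
  assumes "compact P" "convex P"
  defines "S \<equiv> {c *\<^sub>R p + q | p q. p \<in> P \<and> (\<forall>i. q $ i \<ge> 0)}"
  shows "closed S \<and> convex S"
proof -
  define Q :: "(real^'n) set" where "Q = {q. \<forall>i. q $ i \<ge> 0}"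
  have eq: "S = (\<Union>x\<in>Q. \<Union>y\<in>(\<lambda>x. c *\<^sub>R x) ` P. {x + y})"
    unfolding S_def Q_def by (auto simp: add.commute)
  have cQ: "closed Q" unfolding Q_def by (intro closed_Collect_all closed_Collect_le continuous_intros)
  have vQ: "convex Q" unfolding Q_def by (auto simp: convex_def)
  have "closed S" unfolding eq by (intro closed_compact_sums cQ compact_scaling assms)
  moreover have "convex S" unfolding eq by (intro convex_sums vQ convex_scaling assms)
  ultimately show ?thesis by simp
qed

theorem proposition3p5:
  fixes \<phi> :: "complex ^ 'n \<Rightarrow> ereal" and c :: real and r :: nat and b :: "nat \<Rightarrow> nat ^ 'n"
  assumes psh: "psh_on unit_polydisc \<phi>"
    and toric: "toric_on unit_polydisc \<phi>"
    and c_pos: "c > 0"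
    and r_pos: "r \<ge> 1"
    and near0: "\<exists>\<epsilon>>0. \<exists>C::real. \<forall>z\<in>unit_polydisc. norm z < \<epsilon> \<longrightarrow>
                  \<phi> z \<le> log_model c r b z + ereal C \<and> log_model c r b z \<le> \<phi> z + ereal C"
  shows "newton_body \<phi> = {c *\<^sub>R p + q | p q. p \<in> newton_polytope r b \<and> (\<forall>i. q $ i \<ge> 0)}"
proof -
  obtain \<epsilon> C where \<epsilon>: "\<epsilon> > 0" and nb: "\<And>z. z \<in> unit_polydisc \<Longrightarrow> norm z < \<epsilon> \<Longrightarrow>
      \<phi> z \<le> log_model c r b z + ereal C \<and> log_model c r b z \<le> \<phi> z + ereal C"
    using near0 by blast
  define E where "E y = (\<chi> i. complex_of_real (exp ((y::real^'n) $ i)))" for y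
  define bv where "bv j = (\<chi> i. real (b j $ i))" for j
  define \<eta> where "\<eta> = min (1/2) (\<epsilon> / (2 * real CARD('n)))"
  have \<eta>: "0 < \<eta>" "\<eta> < 1" unfolding \<eta>_def using \<epsilon> by auto
  have ln\<eta>: "ln \<eta> < 0" using \<eta> by simp
  have \<eta>card: "real CARD('n) * \<eta> < \<epsilon>"
  proof -
    have "real CARD('n) * \<eta> \<le> real CARD('n) * (\<epsilon> / (2 * real CARD('n)))"
      unfolding \<eta>_def by (intro mult_left_mono) auto
    also have "\<dots> = \<epsilon> / 2" by simp
    finally show ?thesis using \<epsilon> by simp
  qed
  have near: "E y \<in> unit_polydisc \<and> norm (E y) < \<epsilon>" if y: "\<And>i. y $ i \<le> ln \<eta>" for y
  proof -
    have ex: "exp (y $ i) \<le> \<eta>" for i using y[of i] \<eta> by (simp add: ln_ge_iff[symmetric])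
    have "norm (E y) \<le> (\<Sum>i\<in>UNIV. norm (E y $ i))" unfolding norm_vec_def by (rule L2_set_le_sum) simp
    also have "\<dots> \<le> (\<Sum>i\<in>(UNIV::'n set). \<eta>)" unfolding E_def using ex by (intro sum_mono) simp
    also have "\<dots> < \<epsilon>" using \<eta>card by simp
    moreover have "exp (y $ i) < 1" for i using ex[of i] \<eta> by linarith
    ultimately show ?thesis by (auto simp: E_def unit_polydisc_def)
  qed
  have Ein: "E y \<in> unit_polydisc" if "y \<in> negorthant" for y
    using that by (auto simp: E_def unit_polydisc_def negorthant_def)
  have fin: "\<phi> (E y) \<noteq> \<infinity>" if "y \<in> negorthant" for y
    using psh Ein[OF that] unfolding psh_on_def by auto
  define s where "s y = (\<Sum>j=1..r. exp (2 * (bv j \<bullet> y)))" for y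
  have spos: "s y > 0" for y unfolding s_def using r_pos by (intro sum_pos) auto
  have lm: "log_model c r b (E y) = ereal (c / 2 * ln (s y))" for y
  proof -
    have "(\<Sum>j=1..r. monomial_sq (b j) (E y)) = s y"
      unfolding s_def E_def bv_def by (intro sum.cong refl monomial_exp)
    then show ?thesis using spos[of y] unfolding log_model_def by (simp add: Let_def)
  qed
  have sge: "2 * (bv j \<bullet> y) \<le> ln (s y)" if "j \<in> {1..r}" for j y
  proof -
    have "exp (2 * (bv j \<bullet> y)) \<le> s y" unfolding s_def
      by (rule member_le_sum) (use that in auto)
    then show ?thesis using spos[of y] by (simp add: ln_ge_iff)
  qed
  define S where "S = {c *\<^sub>R p + q | p q. p \<in> newton_polytope r b \<and> (\<forall>i. q $ i \<ge> 0)}"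
  have hullS: "newton_polytope r b = convex hull (bv ` {1..r})"
    unfolding newton_polytope_def bv_def by simp
  have "newton_body \<phi> = S"
  proof (intro equalityI subsetI)
    fix x assume "x \<in> S"
    then obtain p q where x: "x = c *\<^sub>R p + q" and p: "p \<in> convex hull (bv ` {1..r})"
      and q: "\<And>i. q $ i \<ge> 0" unfolding S_def hullS by blast
    define K where "K = c * (\<Sum>i\<in>UNIV. \<bar>p $ i\<bar>) * (- ln \<eta>) + C"
    have bound: "ereal (x \<bullet> y) - \<phi> (E y) \<le> ereal K" if y: "y \<in> negorthant" for y
    proof -
      define y' where "y' = (\<chi> i. min (y $ i) (ln \<eta>))"
      have ny': "E y' \<in> unit_polydisc \<and> norm (E y') < \<epsilon>" by (rule near) (simp add: y'_def)
      have yneg: "y $ i < 0" for i using y by (simp add: negorthant_def)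
      have mono: "\<phi> (E y') \<le> \<phi> (E y)"
      proof -
        have "\<phi> (\<chi> i. complex_of_real ((\<chi> i. exp (y' $ i)) $ i)) \<le> \<phi> (\<chi> i. complex_of_real ((\<chi> i. exp (y $ i)) $ i))"
          by (rule mono_all[OF psh toric]) (use yneg in \<open>auto simp: y'_def\<close>)
        then show ?thesis by (simp add: E_def)
      qed
      have low: "ereal (c / 2 * ln (s y')) \<le> \<phi> (E y) + ereal C"
        using nb[of "E y'"] ny' mono lm[of y'] by (metis add_right_mono order.trans)
      obtain g where g: "\<phi> (E y) = ereal g"
        using low fin[OF y] by (cases "\<phi> (E y)") auto
      have lowg: "c / 2 * ln (s y') \<le> g + C" using low g by simp
      have "bv ` {1..r} \<subseteq> {v. (c *\<^sub>R y') \<bullet> v \<le> g + C}"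
      proof
        fix v assume "v \<in> bv ` {1..r}"
        then obtain j where j: "j \<in> {1..r}" "v = bv j" by blast
        have "c * (bv j \<bullet> y') \<le> c / 2 * ln (s y')"
          using sge[OF j(1), of y'] c_pos by (simp add: field_simps)
        then show "v \<in> {v. (c *\<^sub>R y') \<bullet> v \<le> g + C}" using lowg j by (simp add: inner_commute)
      qed
      then have "convex hull (bv ` {1..r}) \<subseteq> {v. (c *\<^sub>R y') \<bullet> v \<le> g + C}"
        by (intro hull_minimal convex_halfspace_le)
      then have pc: "c * (p \<bullet> y') \<le> g + C" using p by (auto simp: inner_commute)
      have qy: "q \<bullet> y \<le> 0" unfolding inner_sum_real
        by (rule sum_nonpos) (use q yneg in \<open>auto intro: mult_nonneg_nonpos less_imp_le\<close>)
      have pd: "p \<bullet> y - p \<bullet> y' \<le> (\<Sum>i\<in>UNIV. \<bar>p $ i\<bar>) * (- ln \<eta>)"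
      proof -
        have "p \<bullet> y - p \<bullet> y' = (\<Sum>i\<in>UNIV. p $ i * (y $ i - y' $ i))"
          unfolding inner_sum_real by (simp add: sum_subtractf right_diff_distrib)
        also have "\<dots> \<le> (\<Sum>i\<in>UNIV. \<bar>p $ i\<bar> * (- ln \<eta>))"
        proof (rule sum_mono)
          fix i
          have d0: "0 \<le> y $ i - y' $ i" and d1: "y $ i - y' $ i \<le> - ln \<eta>"
            using yneg[of i] ln\<eta> by (auto simp: y'_def min_def)
          have "p $ i * (y $ i - y' $ i) \<le> \<bar>p $ i\<bar> * (y $ i - y' $ i)"
            using d0 by (intro mult_right_mono) auto
          also have "\<dots> \<le> \<bar>p $ i\<bar> * (- ln \<eta>)" using d1 by (intro mult_left_mono) auto
          finally show "p $ i * (y $ i - y' $ i) \<le> \<bar>p $ i\<bar> * (- ln \<eta>)" .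
        qed
        also have "\<dots> = (\<Sum>i\<in>UNIV. \<bar>p $ i\<bar>) * (- ln \<eta>)" by (simp add: sum_distrib_right sum_negf)
        finally show ?thesis .
      qed
      have "x \<bullet> y = c * (p \<bullet> y) + q \<bullet> y" unfolding x by (simp add: inner_add_left)
      then have "x \<bullet> y - g \<le> K"
        using pc qy pd c_pos unfolding K_def
        by (smt (verit, ccfv_SIG) mult.assoc mult_left_mono right_diff_distrib)
      then show ?thesis using g by simp
    qed
    have "(SUP y\<in>negorthant. ereal (x \<bullet> y) - \<phi> (E y)) \<le> ereal K"
      using bound by (rule SUP_least)
    then show "x \<in> newton_body \<phi>" unfolding newton_body_def E_def[symmetric]
      using order.strict_trans1 by fastforce
  next
    fix x assume xN: "x \<in> newton_body \<phi>"
    show "x \<in> S"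
    proof (rule ccontr)
      assume xS: "x \<notin> S"
      have cc: "closed S \<and> convex S" unfolding S_def hullS
        by (rule S_closed_convex) (auto intro: finite_imp_compact_convex_hull convex_convex_hull)
      obtain a \<beta> where a1: "a \<bullet> x < \<beta>" and a2: "\<And>w. w \<in> S \<Longrightarrow> \<beta> < a \<bullet> w"
        using separating_hyperplane_closed_point[of S x] cc xS by auto
      have memS: "c *\<^sub>R bv j + q \<in> S" if "j \<in> {1..r}" "\<And>i. q $ i \<ge> 0" for j q
        unfolding S_def hullS using that by (blast intro: hull_inc)
      have aj: "\<beta> < c * (a \<bullet> bv j)" if "j \<in> {1..r}" for j
        using a2[OF memS[OF that, of 0]] by simp
      have ai: "0 \<le> a $ i" for i
      proof (rule ccontr)
        assume "\<not> 0 \<le> a $ i"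
        then have ai: "a $ i < 0" by simp
        define t where "t = (\<bar>\<beta>\<bar> + \<bar>c * (a \<bullet> bv 1)\<bar> + 1) / (- a $ i)"
        have t0: "0 \<le> t" unfolding t_def using ai by (intro divide_nonneg_pos) auto
        have ta: "t * a $ i = - (\<bar>\<beta>\<bar> + \<bar>c * (a \<bullet> bv 1)\<bar> + 1)" unfolding t_def using ai by (simp add: field_simps)
        have "c *\<^sub>R bv 1 + axis i t \<in> S" using r_pos t0 by (intro memS) (auto simp: axis_def)
        then have "\<beta> < a \<bullet> (c *\<^sub>R bv 1 + axis i t)" by (rule a2)
        also have "\<dots> = c * (a \<bullet> bv 1) + t * a $ i" by (simp add: inner_add_right inner_axis mult.commute)
        finally show False using ta by linarith
      qed
      define s0 where "s0 = - ln \<eta>"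
      have s0: "s0 > 0" unfolding s0_def using \<eta> by simp
      define yt where "yt t = (\<chi> i. - t * a $ i - s0)" for t
      define K2 where "K2 = s0 * (\<Sum>i\<in>UNIV. x $ i) + c / 2 * ln (real r) + C"
      have lowb: "ereal (t * (\<beta> - a \<bullet> x) - K2) \<le> ereal (x \<bullet> yt t) - \<phi> (E (yt t))"
        if t0: "t \<ge> 0" for t
      proof -
        have ytn: "yt t $ i \<le> ln \<eta>" for i unfolding yt_def s0_def using ai[of i] t0
          by (simp add: mult_nonneg_nonneg)
        have up: "\<phi> (E (yt t)) \<le> ereal (c / 2 * ln (s (yt t)) + C)"
          using nb[of "E (yt t)"] near[OF ytn] lm[of "yt t"] by simp
        have termb: "exp (2 * (bv j \<bullet> yt t)) \<le> exp (- 2 * t * \<beta> / c)" if j: "j \<in> {1..r}" for j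
        proof -
          have bvnn: "0 \<le> bv j $ i" for i by (simp add: bv_def)
          have "bv j \<bullet> yt t = - t * (a \<bullet> bv j) - s0 * (\<Sum>i\<in>UNIV. bv j $ i)"
            unfolding yt_def inner_sum_real
            by (simp add: algebra_simps sum_subtractf sum_distrib_left sum_negf)
          also have "\<dots> \<le> - t * (a \<bullet> bv j)" using s0 bvnn by (simp add: sum_nonneg)
          also have "\<dots> \<le> - t * \<beta> / c"
          proof -
            have "\<beta> / c < a \<bullet> bv j" using aj[OF j] c_pos by (simp add: field_simps)
            then have "t * (\<beta> / c) \<le> t * (a \<bullet> bv j)" using t0 by (intro mult_left_mono) auto
            then show ?thesis by simp
          qed
          finally show ?thesis by simp
        qed
        have "s (yt t) \<le> real r * exp (- 2 * t * \<beta> / c)"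
        proof -
          have "s (yt t) \<le> (\<Sum>j=1..r. exp (- 2 * t * \<beta> / c))" unfolding s_def by (rule sum_mono) (rule termb)
          then show ?thesis by simp
        qed
        then have "ln (s (yt t)) \<le> ln (real r * exp (- 2 * t * \<beta> / c))"
          using spos by (intro ln_mono) auto
        also have "\<dots> = ln (real r) - 2 * t * \<beta> / c" using r_pos by (simp add: ln_mult)
        finally have "c / 2 * ln (s (yt t)) \<le> c / 2 * (ln (real r) - 2 * t * \<beta> / c)"
          using c_pos by (intro mult_left_mono) auto
        also have "\<dots> = c / 2 * ln (real r) - t * \<beta>" using c_pos by (simp add: field_simps)
        finally have lnb: "c / 2 * ln (s (yt t)) \<le> c / 2 * ln (real r) - t * \<beta>" .
        have xy: "x \<bullet> yt t = - t * (a \<bullet> x) - s0 * (\<Sum>i\<in>UNIV. x $ i)"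
          unfolding yt_def inner_sum_real
          by (simp add: algebra_simps sum_subtractf sum_distrib_left sum_negf)
        have "ereal (t * (\<beta> - a \<bullet> x) - K2) \<le> ereal (x \<bullet> yt t) - ereal (c / 2 * ln (s (yt t)) + C)"
          using lnb xy unfolding K2_def by (simp add: algebra_simps)
        also have "\<dots> \<le> ereal (x \<bullet> yt t) - \<phi> (E (yt t))" by (rule minus_ereal_mono2[OF up])
        finally show ?thesis .
      qed
      have ytneg: "yt t \<in> negorthant" if "t \<ge> 0" for t
      proof -
        have h0: "0 \<le> t * a $ i" for i using ai[of i] that by simp
        have h: "- t * a $ i - s0 < 0" for i using h0[of i] s0 by linarith
        show ?thesis unfolding negorthant_def yt_def using h by simp
      qed
      define SUPV where "SUPV = (SUP y\<in>negorthant. ereal (x \<bullet> y) - \<phi> (E y))"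
      have "SUPV < \<infinity>" using xN unfolding newton_body_def SUPV_def E_def by simp
      then obtain Q where Q: "SUPV \<le> ereal Q" by (cases SUPV) auto
      define d where "d = \<beta> - a \<bullet> x"
      have d: "d > 0" unfolding d_def using a1 by simp
      define t where "t = (\<bar>Q\<bar> + \<bar>K2\<bar> + 1) / d"
      have t0: "t \<ge> 0" unfolding t_def using d by auto
      have "ereal (t * d - K2) \<le> SUPV"
        unfolding SUPV_def d_def using lowb[OF t0] ytneg[OF t0] by (auto intro: SUP_upper2)
      then have "t * d - K2 \<le> Q" using Q by (metis ereal_less_eq(3) order.trans)
      moreover have "t * d = \<bar>Q\<bar> + \<bar>K2\<bar> + 1" unfolding t_def using d by simp
      ultimately show False by linarith
    qed
  qed
  then show ?thesis unfolding S_def .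
qed

end
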